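(* Let $S$ be an entropy function for a finite set $X$, $X'\subset X$, and $S'(A):=\min_{\hat A\subseteq X\setminus X'}S(A\cup\hat A)$ for $A\subseteq X'$. Then $F_{S'}$ is the intersection of $F_S$ with the subspace $\mathbb R^{X'}\subseteq\mathbb R^X$ (functions vanishing on $X\setminus X'$).
   Context: An entropy function for a finite set $X$ is a function $S:2^X\to[0,\infty)$ with $S(\emptyset)=0$, $S(A)+S(B)\ge S(A\cap B)+S(A\cup B)$ and $S(A)+S(B)\ge S(A\setminus B)+S(B\setminus A)$ for all $A,B\subseteq X$. An EDF for $S$ is a function $f:X\to\mathbb R$ (a vector in $\mathbb R^X$) with $\big|\sum_{x\in A}f(x)\big|\le S(A)$ for all $A\subseteq X$; $F_S$ is the set of all EDFs for $S$. $S'$ is an entropy function for $X'$. *)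

theory Defs
  imports "HOL-Analysis.Analysis"
begin

text \<open>Entropy function for a finite set X: S : 2^X -> [0,inf).  We represent S as a
 total function on 'a set, constrained only on subsets of X.\<close>
definition entropy_function :: "'a set \<Rightarrow> ('a set \<Rightarrow> real) \<Rightarrow> bool" where
  "entropy_function X S \<longleftrightarrow>
     S {} = 0 \<and>
     (\<forall>A. A \<subseteq> X \<longrightarrow> S A \<ge> 0) \<and>
     (\<forall>A B. A \<subseteq> X \<longrightarrow> B \<subseteq> X \<longrightarrow> S A + S B \<ge> S (A \<inter> B) + S (A \<union> B)) \<and>
     (\<forall>A B. A \<subseteq> X \<longrightarrow> B \<subseteq> X \<longrightarrow> S A + S B \<ge> S (A - B) + S (B - A))"

text \<open>EDFs: vectors in R^X, represented as functions vanishing outside X.\<close>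
definition EDF_set :: "'a set \<Rightarrow> ('a set \<Rightarrow> real) \<Rightarrow> ('a \<Rightarrow> real) set" where
  "EDF_set X S = {f. (\<forall>x. x \<notin> X \<longrightarrow> f x = 0) \<and>
                     (\<forall>A. A \<subseteq> X \<longrightarrow> \<bar>\<Sum>x\<in>A. f x\<bar> \<le> S A)}"

definition restrict_entropy :: "'a set \<Rightarrow> 'a set \<Rightarrow> ('a set \<Rightarrow> real) \<Rightarrow> 'a set \<Rightarrow> real" where
  "restrict_entropy X X' S A = Min {S (A \<union> H) | H. H \<subseteq> X - X'}"

end

theory Submission
  imports Defs
begin

theorem corollary28:
  fixes X X' :: "'a set" and S :: "'a set \<Rightarrow> real"
  assumes "finite X"
    and "entropy_function X S"
    and "X' \<subseteq> X"
  shows "EDF_set X' (restrict_entropy X X' S) =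
           EDF_set X S \<inter> {f. \<forall>x \<in> X - X'. f x = 0}"
proof -
  have setq: "{S (A \<union> H) | H. H \<subseteq> X - X'} = (\<lambda>H. S (A \<union> H)) ` Pow (X - X')" for A
    by auto
  have fin: "finite {S (A \<union> H) | H. H \<subseteq> X - X'}" for A
    unfolding setq using assms(1) by auto
  have ne: "{S (A \<union> H) | H. H \<subseteq> X - X'} \<noteq> {}" for A by blast
  show ?thesis
  proof (rule set_eqI, rule iffI)
    fix f assume f: "f \<in> EDF_set X' (restrict_entropy X X' S)"
    have z: "\<And>x. x \<notin> X' \<Longrightarrow> f x = 0" and b: "\<And>A. A \<subseteq> X' \<Longrightarrow> \<bar>\<Sum>x\<in>A. f x\<bar> \<le> restrict_entropy X X' S A"
      using f unfolding EDF_set_def by auto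
    have "\<bar>\<Sum>x\<in>A. f x\<bar> \<le> S A" if A: "A \<subseteq> X" for A
    proof -
      have finA: "finite A" using A assms(1) finite_subset by blast
      have "(\<Sum>x\<in>A. f x) = (\<Sum>x\<in>A \<inter> X'. f x)"
        using finA z by (intro sum.mono_neutral_right) auto
      also have "\<bar>\<dots>\<bar> \<le> restrict_entropy X X' S (A \<inter> X')" using b by auto
      also have "\<dots> \<le> S ((A \<inter> X') \<union> (A - X'))"
        unfolding restrict_entropy_def using fin A by (intro Min_le) auto
      also have "(A \<inter> X') \<union> (A - X') = A" by blast
      finally show ?thesis .
    qed
    then show "f \<in> EDF_set X S \<inter> {f. \<forall>x \<in> X - X'. f x = 0}"
      using z assms(3) unfolding EDF_set_def by auto
  next
    fix f assume f: "f \<in> EDF_set X S \<inter> {f. \<forall>x \<in> X - X'. f x = 0}"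
    have z: "\<And>x. x \<notin> X' \<Longrightarrow> f x = 0" and b: "\<And>A. A \<subseteq> X \<Longrightarrow> \<bar>\<Sum>x\<in>A. f x\<bar> \<le> S A"
      using f unfolding EDF_set_def by auto
    have "\<bar>\<Sum>x\<in>A. f x\<bar> \<le> restrict_entropy X X' S A" if A: "A \<subseteq> X'" for A
      unfolding restrict_entropy_def
    proof (subst Min_ge_iff[OF fin ne], intro ballI)
      fix y assume "y \<in> {S (A \<union> H) | H. H \<subseteq> X - X'}"
      then obtain H where H: "H \<subseteq> X - X'" and y: "y = S (A \<union> H)" by blast
      have finAH: "finite (A \<union> H)" by (rule finite_subset[OF _ assms(1)]) (use A H assms(3) in auto)
      have "(\<Sum>x\<in>A. f x) = (\<Sum>x\<in>A \<union> H. f x)"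
        using finAH z H by (intro sum.mono_neutral_left) auto
      also have "\<bar>\<dots>\<bar> \<le> S (A \<union> H)" by (rule b) (use A H assms(3) in auto)
      finally show "\<bar>\<Sum>x\<in>A. f x\<bar> \<le> y" using y by simp
    qed
    then show "f \<in> EDF_set X' (restrict_entropy X X' S)"
      using z unfolding EDF_set_def by auto
  qed
qed

end
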